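(* Suppose $e>1$. For Serre weights $V_{\vec t,\vec s},V_{\vec{t'},\vec{s'}}$, consider the inflation–restriction exact sequence $$0\to H^1(\Gamma,V_{\vec t,\vec s}^\vee\otimes V_{\vec{t'},\vec{s'}})\xrightarrow{\mathrm{inf}}H^1(\mathcal K/\mathcal K_2,V_{\vec t,\vec s}^\vee\otimes V_{\vec{t'},\vec{s'}})\xrightarrow{\mathrm{res}}H^1(\mathcal K_1/\mathcal K_2,V_{\vec t,\vec s}^\vee\otimes V_{\vec{t'},\vec{s'}})^\Gamma.$$ Then the map $\mathrm{res}$ is a split surjection.
   Context: $p$ prime, $K/\mathbb Q_p$ finite with ring of integers $\mathcal O_K$, uniformizer $\pi$, residue field $k$, $f=[k:\mathbb F_p]$, ramification index $e$; $\overline{\mathbb F}$ an algebraic closure of $\mathbb F_p$; fix $\sigma_{f-1}:k\to\overline{\mathbb F}$, $\sigma_{f-1-i}=\sigma_{f-1}^{p^i}$. Serre weight: $V_{\vec t,\vec s}=\bigotimes_{i=0}^{f-1}(\det^{t_i}\otimes\mathrm{Sym}^{s_i}k^2)\otimes_{k,\sigma_i}\overline{\mathbb F}$ with $s_i\in[0,p-1]$. $\Gamma=\mathrm{GL}_2(k)\cong\mathcal K/\mathcal K_1$, $\mathcal K=\mathrm{GL}_2(\mathcal O_K)$, $\mathcal K_n=1+\pi^nM_2(\mathcal O_K)$; representations of $\Gamma$ are regarded as representations of $\mathcal K/\mathcal K_2$ by inflation; $V^\vee$ denotes the dual. *)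

theory Defs
  imports Complex_Main "HOL-Computational_Algebra.Polynomial"
begin

section \<open>2x2 matrices, written (a,b,c,d) for [[a,b],[c,d]]\<close>

type_synonym 'a mat2 = "'a \<times> 'a \<times> 'a \<times> 'a"

fun mmul :: "'a::comm_ring_1 mat2 \<Rightarrow> 'a mat2 \<Rightarrow> 'a mat2" where
  "mmul (a,b,c,d) (a',b',c',d') = (a*a'+b*c', a*b'+b*d', c*a'+d*c', c*b'+d*d')"

fun mdet :: "'a::comm_ring_1 mat2 \<Rightarrow> 'a" where
  "mdet (a,b,c,d) = a*d - b*c"

fun mmap :: "('a \<Rightarrow> 'b) \<Rightarrow> 'a mat2 \<Rightarrow> 'b mat2" where
  "mmap h (a,b,c,d) = (h a, h b, h c, h d)"

fun minv :: "'a::field mat2 \<Rightarrow> 'a mat2" where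
  "minv (a,b,c,d) = (let D = a*d - b*c in (d/D, -b/D, -c/D, a/D))"

definition ring_hom_fun :: "('a::comm_ring_1 \<Rightarrow> 'b::comm_ring_1) \<Rightarrow> bool" where
  "ring_hom_fun h \<longleftrightarrow> h 1 = 1 \<and> (\<forall>x y. h (x + y) = h x + h y) \<and> (\<forall>x y. h (x * y) = h x * h y)"

text \<open>\<open>O\<close> (the type 'o) is a complete discrete valuation ring of characteristic 0 with
  uniformizer \<open>unif\<close> and finite residue field 'k of characteristic p, the reduction map being
  \<open>red\<close>. Up to isomorphism these are exactly the rings of integers of finite extensions of Q_p.\<close>
definition padic_integer_ring :: "nat \<Rightarrow> 'o::idom \<Rightarrow> ('o \<Rightarrow> 'k::field) \<Rightarrow> bool" where
  "padic_integer_ring p unif red \<longleftrightarrow>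
     prime p \<and>
     (\<forall>n::nat. of_nat n = (0::'o) \<longrightarrow> n = 0) \<and>
     unif \<noteq> 0 \<and> \<not> unif dvd 1 \<and>
     (\<forall>x. x \<noteq> 0 \<longrightarrow> (\<exists>u n. u dvd 1 \<and> x = u * unif ^ n)) \<and>
     (\<forall>x::nat \<Rightarrow> 'o. (\<forall>n. unif ^ n dvd (x (Suc n) - x n)) \<longrightarrow>
         (\<exists>y. \<forall>n. unif ^ n dvd (y - x n))) \<and>
     ring_hom_fun red \<and> surj red \<and> (\<forall>x. red x = 0 \<longleftrightarrow> unif dvd x) \<and>
     finite (UNIV :: 'k set) \<and> of_nat p = (0::'k)"

definition ram_index :: "nat \<Rightarrow> 'o::idom \<Rightarrow> nat" where
  "ram_index p unif = (LEAST e. \<exists>u. u dvd 1 \<and> of_nat p = u * unif ^ e)"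

definition alg_closure_Fp :: "nat \<Rightarrow> 'f::field itself \<Rightarrow> bool" where
  "alg_closure_Fp p _ \<longleftrightarrow> of_nat p = (0::'f) \<and>
     (\<forall>q :: 'f poly. degree q > 0 \<longrightarrow> (\<exists>x. poly q x = 0)) \<and>
     (\<forall>x::'f. \<exists>n>0. x ^ (p ^ n) = x)"

definition Kgrp :: "'o::idom mat2 set" where
  "Kgrp = {g. mdet g dvd 1}"

definition Kn :: "'o::idom \<Rightarrow> nat \<Rightarrow> 'o mat2 set" where
  "Kn unif n = {(a,b,c,d). unif ^ n dvd (a - 1) \<and> unif ^ n dvd b \<and> unif ^ n dvd c \<and> unif ^ n dvd (d - 1)}"

definition sigma_i :: "nat \<Rightarrow> nat \<Rightarrow> ('k \<Rightarrow> 'f::field) \<Rightarrow> nat \<Rightarrow> 'k \<Rightarrow> 'f" where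
  "sigma_i p f \<sigma> i x = (\<sigma> x) ^ (p ^ (f - 1 - i))"

definition serre_params :: "nat \<Rightarrow> nat \<Rightarrow> (nat \<Rightarrow> nat) \<Rightarrow> bool" where
  "serre_params p f s \<longleftrightarrow> (\<forall>i<f. s i \<le> p - 1)"

text \<open>basis of the tensor product: multi-indices j with 0 <= j_i <= s_i\<close>
definition Jset :: "nat \<Rightarrow> (nat \<Rightarrow> nat) \<Rightarrow> (nat \<Rightarrow> nat) set" where
  "Jset f s = {j. (\<forall>i<f. j i \<le> s i) \<and> (\<forall>i\<ge>f. j i = 0)}"

text \<open>Sym^s of the standard representation, basis e1^j e2^(s-j); the matrix (a,b,c,d)
  sends e1 to a e1 + c e2 and e2 to b e1 + d e2. symcoef gives the coefficient of
  e1^m e2^(s-m) in g(e1^j e2^(s-j)) = (a e1 + c e2)^j (b e1 + d e2)^(s-j).\<close>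
definition symcoef :: "'f::field mat2 \<Rightarrow> nat \<Rightarrow> nat \<Rightarrow> nat \<Rightarrow> 'f" where
  "symcoef g s m j = (case g of (a,b,c,d) \<Rightarrow>
     (\<Sum>u\<le>j. \<Sum>v\<le>s - j. if u + v = m then
        of_nat (j choose u) * a ^ u * c ^ (j - u) * of_nat ((s - j) choose v) * b ^ v * d ^ (s - j - v)
      else 0))"

text \<open>matrix entry (m, j) of V_{t,s}(g) for g in GL_2(k), i.e. coefficient of e_m in g e_j,
  where V_{t,s} = tensor_i (det^{t_i} Sym^{s_i} k^2) tensor_{k,sigma_i} F\<close>
definition wmat :: "nat \<Rightarrow> nat \<Rightarrow> ('k::field \<Rightarrow> 'f::field) \<Rightarrow> (nat \<Rightarrow> int) \<Rightarrow> (nat \<Rightarrow> nat)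
    \<Rightarrow> 'k mat2 \<Rightarrow> (nat \<Rightarrow> nat) \<Rightarrow> (nat \<Rightarrow> nat) \<Rightarrow> 'f" where
  "wmat p f \<sigma> t s g m j =
     (\<Prod>i<f. (sigma_i p f \<sigma> i (mdet g)) powi (t i) *
              symcoef (mmap (sigma_i p f \<sigma> i) g) (s i) (m i) (j i))"

text \<open>The module M = V_{t,s}^dual tensor V_{t',s'}, elements are coordinate functions on
  Jset f s \<times> Jset f s' (w.r.t. dual basis tensor basis), zero outside.\<close>
definition Mspace :: "nat \<Rightarrow> (nat \<Rightarrow> nat) \<Rightarrow> (nat \<Rightarrow> nat) \<Rightarrow> ((nat \<Rightarrow> nat) \<times> (nat \<Rightarrow> nat) \<Rightarrow> 'f::field) set" where
  "Mspace f s s' = {m. \<forall>x. x \<notin> Jset f s \<times> Jset f s' \<longrightarrow> m x = 0}"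

text \<open>action of gamma in GL_2(k): the dual acts by the transpose of the inverse\<close>
definition Mact :: "nat \<Rightarrow> nat \<Rightarrow> ('k::field \<Rightarrow> 'f::field) \<Rightarrow> (nat \<Rightarrow> int) \<Rightarrow> (nat \<Rightarrow> nat)
    \<Rightarrow> (nat \<Rightarrow> int) \<Rightarrow> (nat \<Rightarrow> nat) \<Rightarrow> 'k mat2
    \<Rightarrow> ((nat \<Rightarrow> nat) \<times> (nat \<Rightarrow> nat) \<Rightarrow> 'f) \<Rightarrow> ((nat \<Rightarrow> nat) \<times> (nat \<Rightarrow> nat) \<Rightarrow> 'f)" where
  "Mact p f \<sigma> t s t' s' \<gamma> m = (\<lambda>(i, i').
     if i \<in> Jset f s \<and> i' \<in> Jset f s' then
       (\<Sum>j\<in>Jset f s. \<Sum>j'\<in>Jset f s'.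
          wmat p f \<sigma> t s (minv \<gamma>) j i * wmat p f \<sigma> t' s' \<gamma> i' j' * m (j, j'))
     else 0)"

text \<open>1-cocycles of K/K_2 with values in M (inflated along K \<rightarrow> GL_2(k)), viewed as
  crossed homomorphisms on K that vanish on K_2 (i.e. factor through K/K_2).\<close>
definition Z1_K_mod_K2 ::
  "nat \<Rightarrow> nat \<Rightarrow> 'o::idom \<Rightarrow> ('o \<Rightarrow> 'k::field) \<Rightarrow> ('k \<Rightarrow> 'f::field) \<Rightarrow> (nat \<Rightarrow> int) \<Rightarrow> (nat \<Rightarrow> nat)
    \<Rightarrow> (nat \<Rightarrow> int) \<Rightarrow> (nat \<Rightarrow> nat)
    \<Rightarrow> ('o mat2 \<Rightarrow> ((nat \<Rightarrow> nat) \<times> (nat \<Rightarrow> nat) \<Rightarrow> 'f)) set" where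
  "Z1_K_mod_K2 p f unif red \<sigma> t s t' s' =
     {d. (\<forall>g\<in>Kgrp. d g \<in> Mspace f s s') \<and>
         (\<forall>g\<in>Kgrp. \<forall>h\<in>Kgrp. d (mmul g h) =
             (\<lambda>x. d g x + Mact p f \<sigma> t s t' s' (mmap red g) (d h) x)) \<and>
         (\<forall>h\<in>Kn unif 2. d h = (\<lambda>_. 0))}"

text \<open>Since K_1 acts trivially on M, H^1(K_1/K_2, M) is the
  space of homomorphisms K_1/K_2 \<rightarrow> M (no nonzero coboundaries); Gamma-invariance of c
  means c(g n g^-1) = g.c(n). Functions are normalised to be 0 outside K_1.\<close>
definition H1_K1_mod_K2_inv ::
  "nat \<Rightarrow> nat \<Rightarrow> 'o::idom \<Rightarrow> ('o \<Rightarrow> 'k::field) \<Rightarrow> ('k \<Rightarrow> 'f::field) \<Rightarrow> (nat \<Rightarrow> int) \<Rightarrow> (nat \<Rightarrow> nat)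
    \<Rightarrow> (nat \<Rightarrow> int) \<Rightarrow> (nat \<Rightarrow> nat)
    \<Rightarrow> ('o mat2 \<Rightarrow> ((nat \<Rightarrow> nat) \<times> (nat \<Rightarrow> nat) \<Rightarrow> 'f)) set" where
  "H1_K1_mod_K2_inv p f unif red \<sigma> t s t' s' =
     {c. (\<forall>n. n \<notin> Kn unif 1 \<longrightarrow> c n = (\<lambda>_. 0)) \<and>
         (\<forall>n\<in>Kn unif 1. c n \<in> Mspace f s s') \<and>
         (\<forall>n\<in>Kn unif 1. \<forall>h\<in>Kn unif 1. c (mmul n h) = (\<lambda>x. c n x + c h x)) \<and>
         (\<forall>h\<in>Kn unif 2. c h = (\<lambda>_. 0)) \<and>
         (\<forall>g\<in>Kgrp. \<forall>n\<in>Kn unif 1. \<forall>n'\<in>Kn unif 1. mmul g n = mmul n' g \<longrightarrow>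
             c n' = Mact p f \<sigma> t s t' s' (mmap red g) (c n))}"

end

theory Submission
  imports Defs
begin

definition mc :: "'a::comm_ring_1 \<Rightarrow> 'a mat2 \<Rightarrow> 'a mat2 \<Rightarrow> bool" where
 "mc m A B = (case A of (a,b,c,d) \<Rightarrow> case B of (a',b',c',d') \<Rightarrow>
     m dvd (a-a') \<and> m dvd (b-b') \<and> m dvd (c-c') \<and> m dvd (d-d'))"

definition Id2 :: "'a::comm_ring_1 mat2" where "Id2 = (1,0,0,1)"

definition iv :: "'a::comm_ring_1 mat2 \<Rightarrow> 'a mat2" where
 "iv A = (case A of (a,b,c,d) \<Rightarrow> let v = (SOME v. mdet A * v = 1) in (v*d, -(v*b), -(v*c), v*a))"

lemma mc_simp: "mc m (a,b,c,d) (a',b',c',d') \<longleftrightarrow> m dvd (a-a') \<and> m dvd (b-b') \<and> m dvd (c-c') \<and> m dvd (d-d')"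
  by (simp add: mc_def)

lemma mc_refl: "mc m A A"
  by (cases A rule: prod_cases4) (simp add: mc_simp)

lemma dvd_sub_sym: "(m::'a::comm_ring_1) dvd (x - y) \<Longrightarrow> m dvd (y - x)"
  by (metis dvd_minus_iff minus_diff_eq)

lemma mc_sym: "mc m A B \<Longrightarrow> mc m B A"
  by (cases A rule: prod_cases4; cases B rule: prod_cases4) (simp add: mc_simp dvd_sub_sym)

lemma dvd_trans3: "(m::'a::comm_ring_1) dvd (x - y) \<Longrightarrow> m dvd (y - z) \<Longrightarrow> m dvd (x - z)"
  by (metis diff_add_cancel add_diff_eq dvd_add diff_diff_eq2)

lemma mc_trans: "mc m A B \<Longrightarrow> mc m B C \<Longrightarrow> mc m A C"
  by (cases A rule: prod_cases4; cases B rule: prod_cases4; cases C rule: prod_cases4)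
     (auto simp add: mc_simp intro: dvd_trans3)

lemma dvd_lin2: "(m::'a::comm_ring_1) dvd (x - x') \<Longrightarrow> m dvd (y - y') \<Longrightarrow> m dvd (u*x + v*y - (u*x' + v*y'))"
proof -
  assume "m dvd (x - x')" "m dvd (y - y')"
  then have "m dvd (u*(x-x') + v*(y-y'))" by (simp add: dvd_add dvd_mult)
  then show ?thesis by (simp add: algebra_simps)
qed

lemma dvd_lin2': "(m::'a::comm_ring_1) dvd (x - x') \<Longrightarrow> m dvd (y - y') \<Longrightarrow> m dvd (x*u + y*v - (x'*u + y'*v))"
  using dvd_lin2[of m x x' y y' u v] by (simp add: mult.commute)

lemma mc_mult_left: "mc m A A' \<Longrightarrow> mc m (mmul B A) (mmul B A')"
  by (cases A rule: prod_cases4; cases A' rule: prod_cases4; cases B rule: prod_cases4)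
     (simp add: mc_simp dvd_lin2)

lemma mc_mult_right: "mc m A A' \<Longrightarrow> mc m (mmul A B) (mmul A' B)"
  by (cases A rule: prod_cases4; cases A' rule: prod_cases4; cases B rule: prod_cases4)
     (simp add: mc_simp dvd_lin2')

lemma mmul_assoc: "mmul (mmul A B) C = mmul A (mmul B (C::'a::comm_ring_1 mat2))"
  by (cases A rule: prod_cases4; cases B rule: prod_cases4; cases C rule: prod_cases4)
     (simp add: algebra_simps)

lemma mmul_Id_left[simp]: "mmul Id2 A = (A::'a::comm_ring_1 mat2)"
  by (cases A rule: prod_cases4) (simp add: Id2_def)

lemma mmul_Id_right[simp]: "mmul A Id2 = (A::'a::comm_ring_1 mat2)"
  by (cases A rule: prod_cases4) (simp add: Id2_def)

lemma mdet_mmul: "mdet (mmul A B) = mdet A * mdet (B::'a::comm_ring_1 mat2)"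
  by (cases A rule: prod_cases4; cases B rule: prod_cases4) (simp add: algebra_simps)

lemma iv_eq: assumes "mdet (a,b,c,d) dvd 1"
  shows "\<exists>v. (a*d - b*c) * v = 1 \<and> iv (a,b,c,d) = (v*d, -(v*b), -(v*c), v*a)"
proof -
  define v where "v = (SOME v. mdet (a,b,c,d) * v = 1)"
  obtain w where w: "1 = mdet (a,b,c,d) * w" using assms by (rule dvdE)
  have v: "mdet (a,b,c,d) * v = 1" unfolding v_def by (rule someI[of _ w]) (rule w[symmetric])
  have "iv (a,b,c,d) = (v*d, -(v*b), -(v*c), v*a)" unfolding iv_def v_def
    by (simp add: Let_def)
  moreover have "(a*d - b*c) * v = 1" using v by simp
  ultimately show ?thesis by blast
qed

lemma iv_right: assumes "mdet A dvd 1" shows "mmul A (iv A) = Id2"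
proof (cases A rule: prod_cases4)
  case (fields a b c d)
  obtain v where e: "(a*d - b*c) * v = 1" "iv A = (v*d, -(v*b), -(v*c), v*a)"
    using iv_eq[of a b c d] assms fields by blast
  have 1: "a*(v*d) + b*(-(v*c)) = 1" proof - have "a*(v*d) + b*(-(v*c)) = (a*d - b*c) * v" by (simp add: algebra_simps) then show ?thesis using e(1) by simp qed
  have 2: "c*(-(v*b)) + d*(v*a) = 1" proof - have "c*(-(v*b)) + d*(v*a) = (a*d - b*c) * v" by (simp add: algebra_simps) then show ?thesis using e(1) by simp qed
  have 3: "a*(-(v*b)) + b*(v*a) = 0" by (simp add: algebra_simps)
  have 4: "c*(v*d) + d*(-(v*c)) = 0" by (simp add: algebra_simps)
  show ?thesis unfolding e(2) unfolding fields Id2_def mmul.simps 1 2 3 4 ..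
qed

lemma iv_left: assumes "mdet A dvd 1" shows "mmul (iv A) A = Id2"
proof (cases A rule: prod_cases4)
  case (fields a b c d)
  obtain v where e: "(a*d - b*c) * v = 1" "iv A = (v*d, -(v*b), -(v*c), v*a)"
    using iv_eq[of a b c d] assms fields by blast
  have 1: "v*d*a + (-(v*b))*c = 1" proof - have "v*d*a + (-(v*b))*c = (a*d - b*c) * v" by (simp add: algebra_simps) then show ?thesis using e(1) by simp qed
  have 2: "(-(v*c))*b + v*a*d = 1" proof - have "(-(v*c))*b + v*a*d = (a*d - b*c) * v" by (simp add: algebra_simps) then show ?thesis using e(1) by simp qed
  have 3: "v*d*b + (-(v*b))*d = 0" by (simp add: algebra_simps)
  have 4: "(-(v*c))*a + v*a*c = 0" by (simp add: algebra_simps)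
  show ?thesis unfolding e(2) unfolding fields Id2_def mmul.simps 1 2 3 4 ..
qed

lemma iv_unique: assumes "mdet A dvd 1" "mmul A X = Id2" shows "iv A = X"
proof -
  have "iv A = mmul (mmul (iv A) A) X" using assms by (simp add: mmul_assoc)
  also have "\<dots> = X" using iv_left[OF assms(1)] by simp
  finally show ?thesis .
qed

lemma iv_mmul: assumes "mdet A dvd 1" "mdet B dvd 1"
  shows "iv (mmul A B) = mmul (iv B) (iv A)"
proof (rule iv_unique)
  show "mdet (mmul A B) dvd 1" using mult_dvd_mono[OF assms] by (simp add: mdet_mmul)
  have "mmul (mmul A B) (mmul (iv B) (iv A)) = mmul A (mmul (mmul B (iv B)) (iv A))"
    by (simp add: mmul_assoc)
  also have "\<dots> = Id2" using iv_right[OF assms(1)] iv_right[OF assms(2)] by simp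
  finally show "mmul (mmul A B) (mmul (iv B) (iv A)) = Id2" .
qed

lemma mc_iv: assumes "mdet A dvd 1" "mdet B dvd 1" "mc m A B" shows "mc m (iv A) (iv B)"
proof -
  have "mc m (mmul (iv A) (mmul B (iv B))) (mmul (iv A) (mmul A (iv B)))"
    by (rule mc_mult_left, rule mc_mult_right, rule mc_sym, rule assms(3))
  then show ?thesis using iv_right[OF assms(2)] iv_left[OF assms(1)]
    by (simp add: mmul_assoc[symmetric])
qed

lemma mdet_Id[simp]: "mdet Id2 = 1" by (simp add: Id2_def)

lemma iv_Id[simp]: "iv Id2 = Id2"
  by (rule iv_unique) simp_all


lemma fd:
  fixes a b :: "'a::comm_ring_1"
  assumes "prime p"
  shows "\<exists>Q. (a+b)^p = a^p + b^p + of_nat p * Q"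
proof -
  have p0: "p > 0" using assms prime_gt_0_nat by blast
  have "(a+b)^p = (\<Sum>k\<le>p. of_nat (p choose k) * a^k * b^(p-k))"
    by (simp add: binomial_ring add.commute)
  also have "{..p} = insert p (insert 0 {0<..<p})" using p0 by auto
  also have "(\<Sum>k\<in>insert p (insert 0 {0<..<p}). of_nat (p choose k) * a^k * b^(p-k))
     = a^p + b^p + (\<Sum>k\<in>{0<..<p}. of_nat (p choose k) * a^k * b^(p-k))"
    using p0 by (simp add: sum.insert add.assoc)
  also have "(\<Sum>k\<in>{0<..<p}. of_nat (p choose k) * a^k * b^(p-k))
      = of_nat p * (\<Sum>k\<in>{0<..<p}. of_nat ((p choose k) div p) * a^k * b^(p-k))"
    unfolding sum_distrib_left
  proof (rule sum.cong[OF refl])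
    fix k assume "k \<in> {0<..<p}"
    then have "p dvd (p choose k)" using dvd_choose_prime assms by auto
    then have "p choose k = p * ((p choose k) div p)" by simp
    then have "(of_nat (p choose k) :: 'a) = of_nat p * of_nat ((p choose k) div p)"
      by (metis of_nat_mult)
    then show "of_nat (p choose k) * a^k * b^(p-k) = of_nat p * (of_nat ((p choose k) div p) * a^k * b^(p-k))"
      by (simp add: mult.assoc)
  qed
  finally show ?thesis by blast
qed

locale padic =
  fixes p :: nat and unif :: "'o::idom" and red :: "'o \<Rightarrow> 'k::field"
  assumes P: "padic_integer_ring p unif red" and E: "ram_index p unif > 1"
begin

lemma prime_p: "prime p" using P unfolding padic_integer_ring_def by blast
lemma p2: "p \<ge> 2" using prime_p prime_ge_2_nat by blast
lemma red_add[simp]: "red (x + y) = red x + red y"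
  using P unfolding padic_integer_ring_def ring_hom_fun_def by blast
lemma red_mult[simp]: "red (x * y) = red x * red y"
  using P unfolding padic_integer_ring_def ring_hom_fun_def by blast
lemma red_one[simp]: "red 1 = 1"
  using P unfolding padic_integer_ring_def ring_hom_fun_def by blast
lemma red_zero[simp]: "red 0 = 0"
proof -
  have "red (0 + 0) = red 0 + red 0" by (rule red_add)
  then have "red 0 + 0 = red 0 + red 0" by simp
  then show ?thesis by (simp only: add_left_cancel)
qed
lemma red_uminus[simp]: "red (- x) = - red x"
proof -
  have "red (x + - x) = red x + red (- x)" by (rule red_add)
  then show ?thesis by (simp add: eq_neg_iff_add_eq_0 add.commute)
qed
lemma red_diff[simp]: "red (x - y) = red x - red y"
  using red_add[of x "-y"] by simp
lemma red_pow[simp]: "red (x ^ n) = red x ^ n"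
  by (induction n) simp_all
lemma red0_iff: "red x = 0 \<longleftrightarrow> unif dvd x"
  using P unfolding padic_integer_ring_def by blast
lemma red_surj: "surj red"
  using P unfolding padic_integer_ring_def by blast
lemma fin_k: "finite (UNIV :: 'k set)"
  using P unfolding padic_integer_ring_def by blast
lemma char_k: "of_nat p = (0::'k)"
  using P unfolding padic_integer_ring_def by blast

lemma char0_o: "of_nat n = (0::'o) \<Longrightarrow> n = 0"
proof -
  have "\<forall>n::nat. of_nat n = (0::'o) \<longrightarrow> n = 0"
    using P unfolding padic_integer_ring_def by (elim conjE) assumption
  then show "of_nat n = (0::'o) \<Longrightarrow> n = 0" by blast
qed

lemma fac: "x \<noteq> 0 \<Longrightarrow> \<exists>u n. u dvd 1 \<and> x = u * unif ^ n"
proof -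
  have "\<forall>x. x \<noteq> 0 \<longrightarrow> (\<exists>u n. u dvd 1 \<and> x = u * unif ^ n)"
    using P unfolding padic_integer_ring_def by (elim conjE) assumption
  then show "x \<noteq> 0 \<Longrightarrow> \<exists>u n. u dvd 1 \<and> x = u * unif ^ n" by blast
qed

lemma unit_if: assumes "\<not> unif dvd x" shows "x dvd 1"
proof -
  have "x \<noteq> 0" using assms by auto
  then obtain u n where u: "u dvd 1" "x = u * unif ^ n"
    using fac by blast
  have "n = 0"
  proof (rule ccontr)
    assume "n \<noteq> 0"
    then have "unif dvd unif ^ n" by (simp add: dvd_power)
    then show False using assms u(2) by auto
  qed
  then show ?thesis using u by simp
qed

lemma red_unit: "red x \<noteq> 0 \<Longrightarrow> x dvd 1"
  using unit_if red0_iff by blast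

lemma unit_red: assumes "x dvd 1" shows "red x \<noteq> 0"
proof
  assume h: "red x = 0"
  obtain w where w: "1 = x * w" using assms by (rule dvdE)
  have "red (x * w) = red 1" using w by simp
  then have "red x * red w = 1" by simp
  then show False using h by simp
qed

lemma pi2p: "unif ^ 2 dvd (of_nat p :: 'o)"
proof -
  have "(of_nat p :: 'o) \<noteq> 0" using char0_o[of p] p2 by auto
  then obtain u n where u: "u dvd 1" "(of_nat p :: 'o) = u * unif ^ n"
    using fac by blast
  define e where "e = ram_index p unif"
  have ex: "\<exists>u. u dvd 1 \<and> (of_nat p :: 'o) = u * unif ^ n" using u by blast
  have "\<exists>u. u dvd 1 \<and> (of_nat p :: 'o) = u * unif ^ e"
    unfolding e_def ram_index_def using ex by (rule LeastI)
  then obtain v where v: "(of_nat p :: 'o) = v * unif ^ e" by blast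
  have "e \<ge> 2" using E unfolding e_def by simp
  then have "unif ^ 2 dvd unif ^ e" by (rule le_imp_power_dvd)
  then show ?thesis using v by simp
qed

lemma frob_add: "((a::'k) + b) ^ p = a ^ p + b ^ p"
  using fd[OF prime_p, of a b] char_k by auto

lemma frob_inj: "inj (\<lambda>x::'k. x ^ p)"
proof (rule injI)
  fix a b :: 'k assume h: "a ^ p = b ^ p"
  have "((a - b) + b) ^ p = (a - b) ^ p + b ^ p" by (rule frob_add)
  then have "(a - b) ^ p = 0" using h by simp
  then show "a = b" by simp
qed

definition r :: "'k \<Rightarrow> 'k" where "r = inv (\<lambda>x::'k. x ^ p)"

lemma frob_surj: "surj (\<lambda>x::'k. x ^ p)"
  using finite_UNIV_inj_surj[OF fin_k frob_inj] .

lemma r_pow: "(r x) ^ p = x"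
  using surj_f_inv_f[OF frob_surj, of x] unfolding r_def by simp

lemma r_eq: "y ^ p = x \<Longrightarrow> r x = y"
  using inv_f_f[OF frob_inj, of y] unfolding r_def by simp

lemma r_add: "r (a + b) = r a + r b"
  by (rule r_eq) (simp add: frob_add r_pow)

lemma r_mult: "r (a * b) = r a * r b"
  by (rule r_eq) (simp add: power_mult_distrib r_pow)

lemma r_one: "r 1 = 1" by (rule r_eq) simp
lemma r_zero: "r 0 = 0" by (rule r_eq) (use p2 in simp)

definition lift :: "'k \<Rightarrow> 'o" where "lift x = (SOME y. red y = x)"
lemma red_lift[simp]: "red (lift x) = x"
  unfolding lift_def using red_surj by (metis (mono_tags) someI surj_def)

definition om :: "'k \<Rightarrow> 'o" where "om x = (lift (r x)) ^ p"

lemma red_om[simp]: "red (om x) = x"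
  by (simp add: om_def r_pow)

lemma cong_pow: assumes "red y = red y'" shows "unif ^ 2 dvd (y' ^ p - y ^ p)"
proof -
  have "red (y' - y) = 0" using assms by simp
  then have "unif dvd (y' - y)" using red0_iff by blast
  then obtain w where w: "y' - y = unif * w" by (rule dvdE)
  obtain Q where Q: "(y + unif * w) ^ p = y ^ p + (unif * w) ^ p + of_nat p * Q"
    using fd[OF prime_p] by blast
  have y': "y' = y + unif * w" using w by (simp add: algebra_simps)
  have "unif ^ 2 dvd (unif * w) ^ p"
  proof -
    have "unif ^ 2 dvd unif ^ p" using p2 by (rule le_imp_power_dvd)
    then show ?thesis by (simp add: power_mult_distrib)
  qed
  moreover have "unif ^ 2 dvd of_nat p * Q" using pi2p by simp
  ultimately have "unif ^ 2 dvd ((unif * w) ^ p + of_nat p * Q)" by (rule dvd_add)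
  moreover have "y' ^ p - y ^ p = (unif * w) ^ p + of_nat p * Q" using Q y' by simp
  ultimately show ?thesis by simp
qed

lemma om_cong: assumes "r x = red y" shows "unif ^ 2 dvd (om x - y ^ p)"
  unfolding om_def by (rule dvd_sub_sym, rule cong_pow) (simp add: assms)

lemma om_add: "unif ^ 2 dvd (om a + om b - om (a + b))"
proof -
  define Y where "Y = lift (r a)"
  define Y' where "Y' = lift (r b)"
  obtain Q where Q: "(Y + Y') ^ p = Y ^ p + Y' ^ p + of_nat p * Q"
    using fd[OF prime_p] by blast
  have 1: "unif ^ 2 dvd (om (a + b) - (Y + Y') ^ p)"
    by (rule om_cong) (simp add: Y_def Y'_def r_add)
  have 2: "unif ^ 2 dvd ((Y + Y') ^ p - (om a + om b))"
    using Q pi2p by (simp add: om_def Y_def Y'_def)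
  have "unif ^ 2 dvd (om (a + b) - (om a + om b))" using dvd_trans3[OF 1 2] .
  then show ?thesis by (rule dvd_sub_sym)
qed

lemma om_mult: "unif ^ 2 dvd (om a * om b - om (a * b))"
proof -
  have 1: "unif ^ 2 dvd (om (a * b) - (lift (r a) * lift (r b)) ^ p)"
    by (rule om_cong) (simp add: r_mult)
  have "om a * om b = (lift (r a) * lift (r b)) ^ p" by (simp add: om_def power_mult_distrib)
  then show ?thesis using dvd_sub_sym[OF 1] by simp
qed

lemma om_one: "unif ^ 2 dvd (om 1 - 1)"
  using om_cong[of 1 1] by (simp add: r_one)
lemma om_zero: "unif ^ 2 dvd (om 0 - 0)"
  using om_cong[of 0 0] p2 by (simp add: r_zero power_0_left)

lemma om_bilin: "unif ^ 2 dvd (om (x*y + z*w) - (om x * om y + om z * om w))"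
proof -
  have 1: "unif ^ 2 dvd (om (x*y + z*w) - (om (x*y) + om (z*w)))"
    by (rule dvd_sub_sym, rule om_add)
  have 2: "unif ^ 2 dvd ((om (x*y) + om (z*w)) - (om x * om y + om z * om w))"
  proof -
    have "unif ^ 2 dvd ((om (x*y) - om x * om y) + (om (z*w) - om z * om w))"
      using dvd_sub_sym[OF om_mult[of x y]] dvd_sub_sym[OF om_mult[of z w]] by (rule dvd_add)
    then show ?thesis by (simp add: algebra_simps)
  qed
  show ?thesis using dvd_trans3[OF 1 2] .
qed


lemma mmap_red_mmul: "mmap red (mmul A B) = mmul (mmap red A) (mmap red B)"
  by (cases A rule: prod_cases4; cases B rule: prod_cases4) simp

lemma mdet_red: "mdet (mmap red A) = red (mdet A)"
  by (cases A rule: prod_cases4) simp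

lemma red_Id[simp]: "mmap red Id2 = Id2" by (simp add: Id2_def)

lemma K1_iff: "A \<in> Kn unif 1 \<longleftrightarrow> mmap red A = Id2"
  by (cases A rule: prod_cases4) (simp add: Kn_def Id2_def red0_iff[symmetric])

lemma K2_iff: "A \<in> Kn unif 2 \<longleftrightarrow> mc (unif^2) A Id2"
  by (cases A rule: prod_cases4) (simp add: Kn_def Id2_def mc_simp)

lemma K1_det: assumes "A \<in> Kn unif 1" shows "mdet A dvd 1"
proof (rule red_unit)
  have "red (mdet A) = mdet (mmap red A)" by (simp add: mdet_red)
  also have "\<dots> = 1" using assms K1_iff by simp
  finally show "red (mdet A) \<noteq> 0" by simp
qed

lemma K2_K1: assumes "A \<in> Kn unif 2" shows "A \<in> Kn unif 1"
proof -
  have d: "unif ^ 1 dvd unif ^ 2" by (rule le_imp_power_dvd) simp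
  show ?thesis using assms by (cases A rule: prod_cases4) (auto simp: Kn_def intro: dvd_trans[OF d])
qed

definition W :: "'o mat2 \<Rightarrow> 'o mat2" where "W g = mmap om (mmap red g)"

lemma red_W: "mmap red (W g) = mmap red g"
  by (cases g rule: prod_cases4) (simp add: W_def)

lemma W_det: assumes "mdet g dvd 1" shows "mdet (W g) dvd 1"
proof (rule red_unit)
  have "red (mdet (W g)) = mdet (mmap red (W g))" by (simp add: mdet_red)
  also have "\<dots> = red (mdet g)" by (simp add: red_W mdet_red)
  finally show "red (mdet (W g)) \<noteq> 0" using unit_red[OF assms] by simp
qed

lemma W_mult: "mc (unif^2) (W (mmul g h)) (mmul (W g) (W h))"
  by (cases g rule: prod_cases4; cases h rule: prod_cases4) (simp add: W_def mc_simp om_bilin)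

lemma W_K1: assumes "mmap red h = Id2" shows "mc (unif^2) (W h) Id2"
proof (cases h rule: prod_cases4)
  case (fields a b c d)
  then have "red a = 1" "red b = 0" "red c = 0" "red d = 1" using assms by (auto simp: Id2_def)
  then show ?thesis using om_one om_zero by (simp add: fields W_def Id2_def mc_simp)
qed

definition nn :: "'o mat2 \<Rightarrow> 'o mat2" where "nn g = mmul g (iv (W g))"

lemma red_inv: assumes "mdet A dvd 1" shows "mmul (mmap red A) (mmap red (iv A)) = Id2"
  using arg_cong[OF iv_right[OF assms], of "mmap red"] by (simp add: mmap_red_mmul)

lemma nn_K1: assumes "mdet g dvd 1" shows "nn g \<in> Kn unif 1"
  unfolding K1_iff nn_def mmap_red_mmul
  using red_inv[OF W_det[OF assms]] by (simp add: red_W)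

lemma nn_cong: assumes "h \<in> Kn unif 1" shows "mc (unif^2) h (nn h)"
proof -
  have dh: "mdet h dvd 1" using K1_det[OF assms] .
  have "mc (unif^2) (iv (W h)) (iv Id2)"
    by (rule mc_iv[OF W_det[OF dh]]) (simp_all add: W_K1 assms[unfolded K1_iff])
  then have "mc (unif^2) (iv (W h)) Id2" by simp
  from mc_mult_left[OF this, of h] have "mc (unif^2) (mmul h (iv (W h))) h" by simp
  then show ?thesis unfolding nn_def by (simp add: mc_sym)
qed

lemma cC:
  fixes c :: "'o mat2 \<Rightarrow> 'x \<Rightarrow> 'y::monoid_add"
  assumes hom: "\<forall>n\<in>Kn unif 1. \<forall>h\<in>Kn unif 1. c (mmul n h) = (\<lambda>x. c n x + c h x)"
    and z: "\<forall>h\<in>Kn unif 2. c h = (\<lambda>_. 0)"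
    and n: "n \<in> Kn unif 1" and n': "n' \<in> Kn unif 1" and cg: "mc (unif^2) n n'"
  shows "c n' = c n"
proof -
  have dn: "mdet n dvd 1" using K1_det[OF n] .
  define h where "h = mmul (iv n) n'"
  have "mc (unif^2) (mmul (iv n) n') (mmul (iv n) n)" by (rule mc_mult_left, rule mc_sym, rule cg)
  then have "h \<in> Kn unif 2" unfolding K2_iff h_def using iv_left[OF dn] by simp
  then have hz: "c h = (\<lambda>_. 0)" and h1: "h \<in> Kn unif 1" using z K2_K1 by auto
  have "n' = mmul n h" unfolding h_def by (simp add: mmul_assoc[symmetric] iv_right[OF dn])
  then have "c n' = (\<lambda>x. c n x + c h x)" using hom n h1 by simp
  then show ?thesis using hz by simp
qed

lemma iv_cancel: assumes "mdet A dvd 1" shows "mmul (iv A) (mmul A X) = X"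
  by (simp add: mmul_assoc[symmetric] iv_left[OF assms])

lemma iv_cancel2: assumes "mdet A dvd 1" shows "mmul (mmul X (iv A)) A = X"
  by (simp add: mmul_assoc iv_left[OF assms])

lemma main_loc:
  fixes \<sigma> :: "'k \<Rightarrow> 'f::field" and f :: nat and t t' :: "nat \<Rightarrow> int" and s s' :: "nat \<Rightarrow> nat"
  shows "\<exists>S. (\<forall>c\<in>H1_K1_mod_K2_inv p f unif red \<sigma> t s t' s'.
               S c \<in> Z1_K_mod_K2 p f unif red \<sigma> t s t' s' \<and> (\<forall>n\<in>Kn unif 1. S c n = c n)) \<and>
             (\<forall>c\<in>H1_K1_mod_K2_inv p f unif red \<sigma> t s t' s'.
              \<forall>c'\<in>H1_K1_mod_K2_inv p f unif red \<sigma> t s t' s'. \<forall>a b :: 'f.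
               S (\<lambda>g x. a * c g x + b * c' g x) = (\<lambda>g x. a * S c g x + b * S c' g x))"
proof -
  have "\<forall>c\<in>H1_K1_mod_K2_inv p f unif red \<sigma> t s t' s'.
               (\<lambda>g. c (nn g)) \<in> Z1_K_mod_K2 p f unif red \<sigma> t s t' s' \<and> (\<forall>n\<in>Kn unif 1. c (nn n) = c n)"
  proof (rule ballI, rule conjI)
  fix c assume cH: "c \<in> H1_K1_mod_K2_inv p f unif red \<sigma> t s t' s'"
  have cM: "\<forall>n\<in>Kn unif 1. c n \<in> Mspace f s s'"
    and hom: "\<forall>n\<in>Kn unif 1. \<forall>h\<in>Kn unif 1. c (mmul n h) = (\<lambda>x. c n x + c h x)"
    and z: "\<forall>h\<in>Kn unif 2. c h = (\<lambda>_. 0)"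
    and inv: "\<forall>g\<in>Kgrp. \<forall>n\<in>Kn unif 1. \<forall>n'\<in>Kn unif 1. mmul g n = mmul n' g \<longrightarrow>
             c n' = Mact p f \<sigma> t s t' s' (mmap red g) (c n)"
    using cH unfolding H1_K1_mod_K2_inv_def by blast+
  show "\<forall>n\<in>Kn unif 1. c (nn n) = c n"
  proof
    fix n assume n: "n \<in> Kn unif 1"
    show "c (nn n) = c n"
      by (rule cC[OF hom z n nn_K1[OF K1_det[OF n]] nn_cong[OF n]])
  qed
  have c0: "c Id2 = (\<lambda>_. 0)" using z K2_iff mc_refl by blast
  show "(\<lambda>g. c (nn g)) \<in> Z1_K_mod_K2 p f unif red \<sigma> t s t' s'"
    unfolding Z1_K_mod_K2_def mem_Collect_eq
  proof (intro conjI ballI)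
    fix g :: "'o mat2" assume "g \<in> Kgrp"
    then show "c (nn g) \<in> Mspace f s s'" using cM nn_K1 by (simp add: Kgrp_def)
  next
    fix h :: "'o mat2" assume h2: "h \<in> Kn unif 2"
    have h1: "h \<in> Kn unif 1" using K2_K1[OF h2] .
    have "mc (unif^2) Id2 (nn h)"
      using mc_trans[OF mc_sym[OF h2[unfolded K2_iff]] nn_cong[OF h1]] .
    moreover have id1: "Id2 \<in> Kn unif 1" unfolding K1_iff by simp
    ultimately have "c (nn h) = c Id2"
      using cC[OF hom z id1 nn_K1[OF K1_det[OF h1]]] by blast
    then show "c (nn h) = (\<lambda>_. 0)" using c0 by simp
  next
    fix g h :: "'o mat2" assume g: "g \<in> Kgrp" and h: "h \<in> Kgrp"
    have dg: "mdet g dvd 1" and dh: "mdet h dvd 1" using g h by (auto simp: Kgrp_def)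
    define A where "A = W g"
    define B where "B = W h"
    have dA: "mdet A dvd 1" unfolding A_def by (rule W_det[OF dg])
    have dB: "mdet B dvd 1" unfolding B_def by (rule W_det[OF dh])
    have dgh: "mdet (mmul g h) dvd 1" using mult_dvd_mono[OF dg dh] by (simp add: mdet_mmul)
    have dW: "mdet (W (mmul g h)) dvd 1" by (rule W_det[OF dgh])
    have dAB: "mdet (mmul A B) dvd 1" using mult_dvd_mono[OF dA dB] by (simp add: mdet_mmul)
    define m where "m = mmul A (mmul (nn h) (iv A))"
    have eq1: "mmul (nn g) m = mmul (mmul g h) (mmul (iv B) (iv A))"
      unfolding m_def nn_def A_def[symmetric] B_def[symmetric]
      by (simp add: mmul_assoc iv_cancel[OF dA])
    have "mc (unif^2) (iv (W (mmul g h))) (iv (mmul A B))"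
      using mc_iv[OF dW dAB] W_mult A_def B_def by simp
    then have "mc (unif^2) (mmul (mmul g h) (iv (W (mmul g h)))) (mmul (mmul g h) (mmul (iv B) (iv A)))"
      unfolding iv_mmul[OF dA dB] by (rule mc_mult_left)
    then have cg: "mc (unif^2) (nn (mmul g h)) (mmul (nn g) m)"
      by (simp only: nn_def[of "mmul g h"] eq1)
    have m1: "m \<in> Kn unif 1"
    proof -
      have "mmap red m = mmul (mmap red A) (mmap red (iv A))"
        unfolding m_def mmap_red_mmul using nn_K1[OF dh, unfolded K1_iff] by simp
      then show ?thesis using red_inv[OF dA] K1_iff by simp
    qed
    have ngm: "mmul (nn g) m \<in> Kn unif 1"
      using nn_K1[OF dg, unfolded K1_iff] m1[unfolded K1_iff] unfolding K1_iff mmap_red_mmul by simp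
    have "c (mmul (nn g) m) = c (nn (mmul g h))"
      using cC[OF hom z nn_K1[OF dgh] ngm cg] .
    then have e1: "c (nn (mmul g h)) = (\<lambda>x. c (nn g) x + c m x)"
      using hom nn_K1[OF dg] m1 by simp
    have AK: "A \<in> Kgrp" using dA by (simp add: Kgrp_def)
    have "mmul m A = mmul A (nn h)" unfolding m_def
      by (simp add: mmul_assoc[symmetric]) (simp add: mmul_assoc iv_left[OF dA])
    then have "c m = Mact p f \<sigma> t s t' s' (mmap red A) (c (nn h))"
      using inv AK nn_K1[OF dh] m1 by metis
    then show "c (nn (mmul g h)) = (\<lambda>x. c (nn g) x + Mact p f \<sigma> t s t' s' (mmap red g) (c (nn h)) x)"
      using e1 by (simp add: A_def red_W)
  qed
  qed
  then show ?thesis by (intro exI[of _ "\<lambda>c g. c (nn g)"]) auto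
qed

end

theorem proposition2p8:
  fixes p f :: nat and unif :: "'o::idom" and red :: "'o \<Rightarrow> 'k::field"
    and \<sigma> :: "'k \<Rightarrow> 'f::field"
    and t t' :: "nat \<Rightarrow> int" and s s' :: "nat \<Rightarrow> nat"
  assumes "padic_integer_ring p unif red"
    and "card (UNIV :: 'k set) = p ^ f"
    and "ram_index p unif > 1"
    and "alg_closure_Fp p TYPE('f)"
    and "ring_hom_fun \<sigma>"
    and "serre_params p f s" and "serre_params p f s'"
  shows "\<exists>S. (\<forall>c\<in>H1_K1_mod_K2_inv p f unif red \<sigma> t s t' s'.
               S c \<in> Z1_K_mod_K2 p f unif red \<sigma> t s t' s' \<and> (\<forall>n\<in>Kn unif 1. S c n = c n)) \<and>
             (\<forall>c\<in>H1_K1_mod_K2_inv p f unif red \<sigma> t s t' s'.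
              \<forall>c'\<in>H1_K1_mod_K2_inv p f unif red \<sigma> t s t' s'. \<forall>a b :: 'f.
               S (\<lambda>g x. a * c g x + b * c' g x) = (\<lambda>g x. a * S c g x + b * S c' g x))"
proof -
  interpret padic p unif red using assms(1,3) by unfold_locales
  show ?thesis by (rule main_loc)
qed

end
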